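(* $\chi^{\mathsf{w}}_{3,3}(n)=\Omega\!\left(\dfrac{\log n}{\log\log n}\right)$ as $n\to\infty$; that is, there are constants $c>0$ and $n_0$ such that for all $n\ge n_0$ there is a $3$-uniform hypergraph on $n$ vertices, linearly embeddable into $\mathbb{R}^3$, with weak chromatic number at least $c\log n/\log\log n$.
   Context: A $k$-uniform hypergraph $H=(V,E)$ consists of a finite set $V$ and $E\subseteq\binom{V}{k}$. A (linear) embedding of $H$ into $\mathbb{R}^d$ is a map $\phi:V(H)\to\mathbb{R}^d$ with $\dim\operatorname{aff}\phi(e)=k-1$ for every edge $e$ and $\operatorname{conv}\phi(e_1)\cap\operatorname{conv}\phi(e_2)=\operatorname{conv}\phi(e_1\cap e_2)$ for all edges $e_1,e_2$. $\mathcal{E}_{d,k}$ is the set of $k$-uniform hypergraphs admitting such an embedding into $\mathbb{R}^d$. A weak $c$-coloring of $H$ is a map $\kappa:V(H)\to\{1,\dots,c\}$ with $|\kappa(e)|>1$ for every edge $e$; $\chi^{\mathsf{w}}(H)$ is the least such $c$. $\chi^{\mathsf{w}}_{d,k}(n)=\max\{\chi^{\mathsf{w}}(H): H\in\mathcal{E}_{d,k},\ |V(H)|=n\}$. *)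

theory Defs
  imports "HOL-Analysis.Analysis"
begin

definition uniform_hypergraph :: "nat \<Rightarrow> 'a set \<Rightarrow> 'a set set \<Rightarrow> bool" where
  "uniform_hypergraph k V E \<longleftrightarrow> finite V \<and> (\<forall>e\<in>E. e \<subseteq> V \<and> card e = k)"

definition linear_embedding :: "nat \<Rightarrow> 'a set \<Rightarrow> 'a set set \<Rightarrow> ('a \<Rightarrow> 'b::euclidean_space) \<Rightarrow> bool" where
  "linear_embedding k V E \<phi> \<longleftrightarrow>
     (\<forall>e\<in>E. aff_dim (\<phi> ` e) = int k - 1) \<and>
     (\<forall>e1\<in>E. \<forall>e2\<in>E. convex hull (\<phi> ` e1) \<inter> convex hull (\<phi> ` e2) = convex hull (\<phi> ` (e1 \<inter> e2)))"

definition embeddable_3_3 :: "'a set \<Rightarrow> 'a set set \<Rightarrow> bool" where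
  "embeddable_3_3 V E \<longleftrightarrow> uniform_hypergraph 3 V E \<and>
     (\<exists>\<phi> :: 'a \<Rightarrow> real^3. linear_embedding 3 V E \<phi>)"

definition weak_coloring :: "'a set \<Rightarrow> 'a set set \<Rightarrow> nat \<Rightarrow> ('a \<Rightarrow> nat) \<Rightarrow> bool" where
  "weak_coloring V E c \<kappa> \<longleftrightarrow> (\<forall>v\<in>V. \<kappa> v \<in> {1..c}) \<and> (\<forall>e\<in>E. card (\<kappa> ` e) > 1)"

definition weak_chromatic_number :: "'a set \<Rightarrow> 'a set set \<Rightarrow> nat" where
  "weak_chromatic_number V E = (LEAST c. \<exists>\<kappa>. weak_coloring V E c \<kappa>)"

end

theory Submission
  imports Defs
begin

definition cubic :: "(real \<Rightarrow> real) \<Rightarrow> bool" where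
  "cubic f \<longleftrightarrow> (\<exists>a1 b1 a2 b2 a3 b3. \<forall>t. f t = (a1*t+b1)*(a2*t+b2)*(a3*t+b3))"

lemma expand3: "(a1*t+b1)*(a2*t+b2)*(a3*t+b3) = b1*b2*b3 + (a1*b2*b3 + b1*a2*b3 + b1*b2*a3)*t + (a1*a2*b3 + a1*b2*a3 + b1*a2*a3)*t^2 + (a1*a2*a3)*t^3"
  for t :: real
  unfolding power2_eq_square power3_eq_cube by algebra

lemma cubic_expand:
  assumes "cubic f"
  obtains a b c d where "\<And>t. f t = a + b*t + c*t^2 + d*t^3"
proof -
  from assms obtain a1 b1 a2 b2 a3 b3 where h: "\<And>t. f t = (a1*t+b1)*(a2*t+b2)*(a3*t+b3)"
    unfolding cubic_def by blast
  show ?thesis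
    by (rule that[of "b1*b2*b3" "a1*b2*b3 + b1*a2*b3 + b1*b2*a3" "a1*a2*b3 + a1*b2*a3 + b1*a2*a3" "a1*a2*a3"])
       (simp only: h expand3)
qed

lemma neg_aux: "- ((a1*t+b1)*Y) = ((-a1)*t + (-b1))*(Y::real)"
  by (simp add: algebra_simps)

lemma shift_aux: "a*(t-b) + c = a*t + (c - a*b)" for a t b c :: real
  by (simp add: algebra_simps)

lemma cubic_neg: "cubic f \<Longrightarrow> cubic (\<lambda>t. - f t)"
proof -
  assume "cubic f"
  then obtain a1 b1 a2 b2 a3 b3 where h: "\<And>t. f t = (a1*t+b1)*(a2*t+b2)*(a3*t+b3)"
    unfolding cubic_def by blast
  have "\<And>t. - f t = ((-a1)*t + (-b1))*(a2*t+b2)*(a3*t+b3)"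
    unfolding h using neg_aux by (metis mult.assoc)
  thus ?thesis unfolding cubic_def by blast
qed

lemma cubic_shift: "cubic f \<Longrightarrow> cubic (\<lambda>t. f (t - b))"
proof -
  assume "cubic f"
  then obtain a1 b1 a2 b2 a3 b3 where h: "\<And>t. f t = (a1*t+b1)*(a2*t+b2)*(a3*t+b3)"
    unfolding cubic_def by blast
  have "\<And>t. f (t - b) = (a1*t+(b1 - a1*b))*(a2*t+(b2-a2*b))*(a3*t+(b3-a3*b))"
    unfolding h shift_aux by simp
  thus ?thesis unfolding cubic_def by blast
qed
lemma cubicI: "(\<And>t. f t = (a1*t+b1)*(a2*t+b2)*(a3*t+b3)) \<Longrightarrow> cubic f"
  unfolding cubic_def by blast

definition cmpt :: "nat set \<Rightarrow> nat set \<Rightarrow> bool" where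
  "cmpt e1 e2 \<longleftrightarrow> (\<exists>f. cubic f \<and> (\<forall>t\<in>e1. f (real t) \<ge> 0) \<and> (\<forall>t\<in>e2. f (real t) \<le> 0)
      \<and> (\<forall>t\<in>e1 \<union> e2. f (real t) = 0 \<longrightarrow> t \<in> e1 \<inter> e2))"

lemma compatD:
  assumes "cmpt e1 e2"
  obtains f where "cubic f" "\<forall>t\<in>e1. f (real t) \<ge> 0" "\<forall>t\<in>e2. f (real t) \<le> 0"
      "\<forall>t\<in>e1 \<union> e2. f (real t) = 0 \<longrightarrow> t \<in> e1 \<inter> e2"
  using assms unfolding cmpt_def by (elim exE conjE) (rule that)

lemma compatI:
  assumes "cubic f" "\<forall>t\<in>e1. f (real t) \<ge> 0" "\<forall>t\<in>e2. f (real t) \<le> 0"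
      "\<forall>t\<in>e1 \<union> e2. f (real t) = 0 \<longrightarrow> t \<in> e1 \<inter> e2"
  shows "cmpt e1 e2"
  unfolding cmpt_def by (rule exI[of _ f]) (intro conjI assms)

lemma compat_sym: "cmpt e1 e2 \<Longrightarrow> cmpt e2 e1"
proof -
  assume "cmpt e1 e2"
  then obtain f where h: "cubic f" "\<forall>t\<in>e1. f (real t) \<ge> 0" "\<forall>t\<in>e2. f (real t) \<le> 0"
      "\<forall>t\<in>e1 \<union> e2. f (real t) = 0 \<longrightarrow> t \<in> e1 \<inter> e2" by (rule compatD)
  show ?thesis
  proof (rule compatI[of "\<lambda>t. - f t"])
    show "cubic (\<lambda>t. - f t)" by (rule cubic_neg[OF h(1)])
    show "\<forall>t\<in>e2. - f (real t) \<ge> 0" using h(3) by simp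
    show "\<forall>t\<in>e1. - f (real t) \<le> 0" using h(2) by simp
    show "\<forall>t\<in>e2 \<union> e1. - f (real t) = 0 \<longrightarrow> t \<in> e2 \<inter> e1" using h(4) by (metis Int_commute Un_commute neg_equal_0_iff_equal)
  qed
qed

lemma compat_refl: "cmpt e e"
proof -
  have "cubic (\<lambda>t. 0)" by (rule cubicI[of _ 0 0 0 0 0 0]) simp
  thus ?thesis unfolding cmpt_def by auto
qed

lemma compat_shift: "cmpt e1 e2 \<Longrightarrow> cmpt ((\<lambda>x. b + x) ` e1) ((\<lambda>x. b + x) ` e2)"
proof -
  assume "cmpt e1 e2"
  then obtain f where h: "cubic f" "\<forall>t\<in>e1. f (real t) \<ge> 0" "\<forall>t\<in>e2. f (real t) \<le> 0"
      "\<forall>t\<in>e1 \<union> e2. f (real t) = 0 \<longrightarrow> t \<in> e1 \<inter> e2" by (rule compatD)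
  let ?g = "\<lambda>t. f (t - real b)"
  have g: "?g (real (b + x)) = f (real x)" for x by simp
  have "cubic ?g" using cubic_shift[OF h(1)] .
  moreover have "\<forall>t\<in>(\<lambda>x. b + x) ` e1. ?g (real t) \<ge> 0" using h(2) g by auto
  moreover have "\<forall>t\<in>(\<lambda>x. b + x) ` e2. ?g (real t) \<le> 0" using h(3) g by auto
  moreover have "\<forall>t\<in>(\<lambda>x. b + x) ` e1 \<union> (\<lambda>x. b + x) ` e2. ?g (real t) = 0 \<longrightarrow>
      t \<in> (\<lambda>x. b + x) ` e1 \<inter> (\<lambda>x. b + x) ` e2"
  proof
    fix t assume "t \<in> (\<lambda>x. b + x) ` e1 \<union> (\<lambda>x. b + x) ` e2"
    then obtain x where x: "t = b + x" "x \<in> e1 \<union> e2" by auto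
    show "?g (real t) = 0 \<longrightarrow> t \<in> (\<lambda>x. b + x) ` e1 \<inter> (\<lambda>x. b + x) ` e2"
    proof
      assume "?g (real t) = 0"
      hence "f (real x) = 0" using x(1) g by simp
      hence "x \<in> e1 \<inter> e2" using h(4) x(2) by blast
      thus "t \<in> (\<lambda>x. b + x) ` e1 \<inter> (\<lambda>x. b + x) ` e2" using x(1) by blast
    qed
  qed
  ultimately show ?thesis by (rule compatI)
qed

definition mc :: "nat \<Rightarrow> real^3" where
  "mc t = vector [real t, real t ^ 2, real t ^ 3]"

lemma mc_inj: "inj mc"
  by (rule injI) (metis mc_def of_nat_eq_iff vector_3(1))

definition lin :: "real \<Rightarrow> real \<Rightarrow> real \<Rightarrow> real^3 \<Rightarrow> real" where
  "lin b c d y = b * y$1 + c * y$2 + d * y$3"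

lemma lin_sum: "lin b c d (\<Sum>y\<in>A. u y *\<^sub>R y) = (\<Sum>y\<in>A. u y * lin b c d y)"
  unfolding lin_def by (simp add: sum_distrib_left sum.distrib algebra_simps)

lemma lin_mc: "a + lin b c d (mc t) = a + b * real t + c * real t^2 + d * real t^3"
  unfolding lin_def mc_def by simp

lemma hull_compat:
  assumes "finite e1" "finite e2" "cmpt e1 e2"
  shows "convex hull (mc ` e1) \<inter> convex hull (mc ` e2) = convex hull (mc ` (e1 \<inter> e2))"
proof
  show "convex hull (mc ` (e1 \<inter> e2)) \<subseteq> convex hull (mc ` e1) \<inter> convex hull (mc ` e2)"
    by (simp add: hull_mono image_mono)
next
  from assms(3) obtain f where cf: "cubic f" and p1: "\<forall>t\<in>e1. f (real t) \<ge> 0"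
    and p2: "\<forall>t\<in>e2. f (real t) \<le> 0" and z: "\<forall>t\<in>e1 \<union> e2. f (real t) = 0 \<longrightarrow> t \<in> e1 \<inter> e2"
    by (rule compatD)
  obtain a b c d where fe: "\<And>t. f t = a + b*t + c*t^2 + d*t^3" using cubic_expand[OF cf] by blast
  define g where "g y = a + lin b c d y" for y
  have gmc: "g (mc t) = f (real t)" for t unfolding g_def lin_mc fe by simp
  have gsum: "g (\<Sum>y\<in>A. u y *\<^sub>R y) = (\<Sum>y\<in>A. u y * g y)" if "sum u A = 1" for A u
  proof -
    have "g (\<Sum>y\<in>A. u y *\<^sub>R y) = a * sum u A + (\<Sum>y\<in>A. u y * lin b c d y)"
      unfolding g_def lin_sum using that by simp
    also have "\<dots> = (\<Sum>y\<in>A. u y * g y)"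
      unfolding g_def by (simp add: sum_distrib_left sum.distrib algebra_simps)
    finally show ?thesis .
  qed
  show "convex hull (mc ` e1) \<inter> convex hull (mc ` e2) \<subseteq> convex hull (mc ` (e1 \<inter> e2))"
  proof
    fix x assume x: "x \<in> convex hull (mc ` e1) \<inter> convex hull (mc ` e2)"
    have fA: "finite (mc ` e1)" "finite (mc ` e2)" using assms by auto
    obtain u where u0: "\<forall>y\<in>mc ` e1. 0 \<le> u y" and u1: "sum u (mc ` e1) = 1"
      and ux: "(\<Sum>y\<in>mc ` e1. u y *\<^sub>R y) = x"
      using x unfolding convex_hull_finite[OF fA(1)] by blast
    obtain w where w0: "\<forall>y\<in>mc ` e2. 0 \<le> w y" and w1: "sum w (mc ` e2) = 1"
      and wx: "(\<Sum>y\<in>mc ` e2. w y *\<^sub>R y) = x"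
      using x unfolding convex_hull_finite[OF fA(2)] by blast
    have nn1: "\<forall>y\<in>mc ` e1. 0 \<le> u y * g y" using u0 p1 gmc by auto
    have gx1: "g x = (\<Sum>y\<in>mc ` e1. u y * g y)" using gsum[OF u1] ux by simp
    have gx2: "g x = (\<Sum>y\<in>mc ` e2. w y * g y)" using gsum[OF w1] wx by simp
    have "g x \<le> 0" unfolding gx2 using w0 p2 gmc by (auto intro!: sum_nonpos mult_nonneg_nonpos)
    moreover have "g x \<ge> 0" unfolding gx1 using nn1 by (auto intro!: sum_nonneg)
    ultimately have s0: "(\<Sum>y\<in>mc ` e1. u y * g y) = 0" using gx1 by simp
    have each: "\<forall>y\<in>mc ` e1. u y * g y = 0"
      using iffD1[OF sum_nonneg_eq_0_iff[OF fA(1), of "\<lambda>y. u y * g y"] s0] nn1 by blast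
    have uz: "\<forall>y\<in>mc ` e1 - mc ` (e1 \<inter> e2). u y = 0"
    proof
      fix y assume y: "y \<in> mc ` e1 - mc ` (e1 \<inter> e2)"
      then obtain t where t: "t \<in> e1" "y = mc t" "t \<notin> e2" by auto
      have "f (real t) \<noteq> 0" using z t by auto
      hence "g y \<noteq> 0" using gmc t by simp
      thus "u y = 0" using each y by auto
    qed
    have sub: "mc ` (e1 \<inter> e2) \<subseteq> mc ` e1" by auto
    have c1: "(\<Sum>y\<in>mc ` (e1 \<inter> e2). u y *\<^sub>R y) = x"
      using ux sum.mono_neutral_left[OF fA(1) sub, of "\<lambda>y. u y *\<^sub>R y"] uz by simp
    have c2: "sum u (mc ` (e1 \<inter> e2)) = 1"
      using u1 sum.mono_neutral_left[OF fA(1) sub, of u] uz by simp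
    have c3: "\<forall>y\<in>mc ` (e1 \<inter> e2). 0 \<le> u y" using u0 by auto
    have fC: "finite (mc ` (e1 \<inter> e2))" using assms by auto
    have "x \<in> {y. \<exists>u. (\<forall>x\<in>mc ` (e1 \<inter> e2). 0 \<le> u x) \<and> sum u (mc ` (e1 \<inter> e2)) = 1
       \<and> (\<Sum>x\<in>mc ` (e1 \<inter> e2). u x *\<^sub>R x) = y}"
      using c1 c2 c3 by blast
    thus "x \<in> convex hull (mc ` (e1 \<inter> e2))"
      unfolding convex_hull_finite[OF fC] .
  qed
qed

lemma lin_sum0: "sum u A = 0 \<Longrightarrow> (\<Sum>y\<in>A. u y *\<^sub>R y) = 0 \<Longrightarrow> (\<Sum>y\<in>A. u y * (a + lin b c d y)) = 0"
proof -
  assume h: "sum u A = 0" "(\<Sum>y\<in>A. u y *\<^sub>R y) = 0"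
  have "(\<Sum>y\<in>A. u y * (a + lin b c d y)) = a * sum u A + lin b c d (\<Sum>y\<in>A. u y *\<^sub>R y)"
    by (simp add: lin_sum sum_distrib_left sum.distrib algebra_simps)
  also have "\<dots> = 0" using h by (simp add: lin_def)
  finally show ?thesis .
qed

lemma aff_dim_mc:
  assumes "x \<noteq> y" "x \<noteq> z" "y \<noteq> z"
  shows "aff_dim (mc ` {x, y, z}) = 2"
proof -
  let ?S = "mc ` {x,y,z}"
  have card: "card ?S = 3" using assms mc_inj by (simp add: inj_eq)
  have fin: "finite ?S" by simp
  have key: "U (mc p) = 0" if U: "sum U ?S = 0" "(\<Sum>v\<in>?S. U v *\<^sub>R v) = 0"
      and p: "p \<in> {x,y,z}" for U p
  proof -
    obtain q r where qr: "{x,y,z} = {p,q,r}" "p \<noteq> q" "p \<noteq> r" "q \<noteq> r"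
      using p assms by auto
    have S: "?S = {mc p, mc q, mc r}" using qr by simp
    have d: "mc p \<noteq> mc q" "mc p \<noteq> mc r" "mc q \<noteq> mc r" using qr mc_inj by (auto simp: inj_eq)
    define f where "f t = (t - real q) * (t - real r) * (0*t+1)" for t
    have cf: "cubic f" by (rule cubicI[of _ 1 "- real q" 1 "- real r" 0 1]) (simp add: f_def)
    obtain a b c d where fe: "\<And>t. f t = a + b*t + c*t^2 + d*t^3"
      using cubic_expand[OF cf] by blast
    have gm: "a + lin b c d (mc t) = f (real t)" for t using lin_mc fe by simp
    have "(\<Sum>v\<in>?S. U v * (a + lin b c d v)) = 0" by (rule lin_sum0[OF U])
    hence "U (mc p) * f p + U (mc q) * f q + U (mc r) * f r = 0"
      unfolding S using d by (simp add: gm)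
    hence "U (mc p) * f p = 0" unfolding f_def by simp
    moreover have "f p \<noteq> 0" unfolding f_def using qr by simp
    ultimately show ?thesis by simp
  qed
  have "\<not> affine_dependent ?S"
    unfolding affine_dependent_explicit_finite[OF fin] using key by blast
  hence "of_nat (card ?S) = aff_dim ?S + 1" by (rule aff_dim_affine_independent)
  thus ?thesis using card by simp
qed

lemma cmpt_gen:
  assumes "cubic f" "\<forall>t\<in>A. t \<notin> B \<longrightarrow> f (real t) > 0" "\<forall>t\<in>B. t \<notin> A \<longrightarrow> f (real t) < 0"
    "\<forall>t\<in>A \<inter> B. f (real t) = 0"
  shows "cmpt A B"
proof (rule compatI[of f])
  show "cubic f" by fact
  show "\<forall>t\<in>A. 0 \<le> f (real t)"
  proof
    fix t assume t: "t \<in> A"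
    show "0 \<le> f (real t)"
    proof (cases "t \<in> B")
      case True thus ?thesis using assms(4) t by simp
    next
      case False thus ?thesis using assms(2) t by force
    qed
  qed
  show "\<forall>t\<in>B. f (real t) \<le> 0"
  proof
    fix t assume t: "t \<in> B"
    show "f (real t) \<le> 0"
    proof (cases "t \<in> A")
      case True thus ?thesis using assms(4) t by simp
    next
      case False thus ?thesis using assms(3) t by force
    qed
  qed
  show "\<forall>t\<in>A \<union> B. f (real t) = 0 \<longrightarrow> t \<in> A \<inter> B"
  proof (intro ballI impI)
    fix t assume t: "t \<in> A \<union> B" and z: "f (real t) = 0"
    show "t \<in> A \<inter> B"
    proof (rule ccontr)
      assume "t \<notin> A \<inter> B"
      hence "(t \<in> A \<and> t \<notin> B) \<or> (t \<in> B \<and> t \<notin> A)" using t by blast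
      thus False using assms(2,3) z by force
    qed
  qed
qed

lemma cubic_prod: "cubic (\<lambda>t. (a1*t+b1)*(a2*t+b2)*(a3*t+b3))"
  by (rule cubicI) (rule refl)

lemma lt_real: "(x::nat) < y \<Longrightarrow> real x + 1 \<le> real y"
  by linarith

lemma ppp: "(a::real) > 0 \<Longrightarrow> b > 0 \<Longrightarrow> c > 0 \<Longrightarrow> a*b*c > 0" by simp
lemma ppn: "(a::real) > 0 \<Longrightarrow> b > 0 \<Longrightarrow> c < 0 \<Longrightarrow> a*b*c < 0" by (simp add: mult_pos_neg)
lemma pnn: "(a::real) > 0 \<Longrightarrow> b < 0 \<Longrightarrow> c < 0 \<Longrightarrow> a*b*c > 0" by (simp add: mult_pos_neg mult_neg_neg)
lemma npp: "(a::real) < 0 \<Longrightarrow> b > 0 \<Longrightarrow> c > 0 \<Longrightarrow> a*b*c < 0" by (simp add: mult_neg_pos)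
lemma nnp: "(a::real) < 0 \<Longrightarrow> b < 0 \<Longrightarrow> c > 0 \<Longrightarrow> a*b*c > 0" by (simp add: mult_neg_neg)
lemma nnn: "(a::real) < 0 \<Longrightarrow> b < 0 \<Longrightarrow> c < 0 \<Longrightarrow> a*b*c < 0" by (simp add: mult_neg_neg mult_pos_neg)
lemma npn: "(a::real) < 0 \<Longrightarrow> b > 0 \<Longrightarrow> c < 0 \<Longrightarrow> a*b*c > 0" by (simp add: mult_neg_pos mult_neg_neg)
lemma pnp: "(a::real) > 0 \<Longrightarrow> b < 0 \<Longrightarrow> c > 0 \<Longrightarrow> a*b*c < 0" by (simp add: mult_pos_neg mult_neg_pos)

lemma pat_interval:
  assumes "lo < hi" "\<forall>t\<in>A. lo \<le> t \<and> t < hi" "\<forall>t\<in>B. t < lo \<or> hi \<le> t"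
  shows "cmpt A B"
proof -
  define f where "f = (\<lambda>t. (1*t + (-(real lo - 1/2))) * ((-1)*t + (real hi - 1/2)) * (0*t+1))"
  have cf: "cubic f" unfolding f_def by (rule cubic_prod)
  have AB: "A \<inter> B = {}" using assms(2,3) by force
  show ?thesis
  proof (rule cmpt_gen[OF cf])
    show "\<forall>t\<in>A. t \<notin> B \<longrightarrow> f (real t) > 0"
    proof (intro ballI impI)
      fix t assume "t \<in> A"
      hence "lo \<le> t" "t < hi" using assms(2) by auto
      hence "real lo \<le> real t" "real t + 1 \<le> real hi" by linarith+
      thus "f (real t) > 0" unfolding f_def by (intro ppp) linarith+
    qed
    show "\<forall>t\<in>B. t \<notin> A \<longrightarrow> f (real t) < 0"
    proof (intro ballI impI)
      fix t assume "t \<in> B"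
      hence "t < lo \<or> hi \<le> t" using assms(3) by auto
      moreover have "real lo + 1 \<le> real hi" using assms(1) by linarith
      ultimately have "(real t + 1 \<le> real lo) \<or> (real hi \<le> real t)" by linarith
      thus "f (real t) < 0"
      proof
        assume "real t + 1 \<le> real lo"
        thus ?thesis unfolding f_def using \<open>real lo + 1 \<le> real hi\<close> by (intro npp) linarith+
      next
        assume "real hi \<le> real t"
        thus ?thesis unfolding f_def using \<open>real lo + 1 \<le> real hi\<close> by (intro pnp) linarith+
      qed
    qed
    show "\<forall>t\<in>A \<inter> B. f (real t) = 0" using AB by simp
  qed
qed


lemma sqp: "(a::real) \<noteq> 0 \<Longrightarrow> c > 0 \<Longrightarrow> a*a*c > 0"
  by (metis mult_pos_pos not_real_square_gt_zero)
lemma sqn: "(a::real) \<noteq> 0 \<Longrightarrow> c < 0 \<Longrightarrow> a*a*c < 0"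
  by (metis mult_pos_neg not_real_square_gt_zero)

lemma pat_book_int:
  assumes A: "\<forall>t\<in>A. y < t" and xy: "x < y" and yv: "y < v"
  shows "cmpt A {x,y,v}"
proof (cases "v \<in> A")
  case True
  define f where "f = (\<lambda>t. (1*t + (- real v)) * (1*t + (- real v)) * (1*t + (-(real y + 1/2))))"
  have cf: "cubic f" unfolding f_def by (rule cubic_prod)
  have xA: "x \<notin> A" "y \<notin> A" using A xy by auto
  show ?thesis
  proof (rule cmpt_gen[OF cf])
    show "\<forall>t\<in>A. t \<notin> {x,y,v} \<longrightarrow> f (real t) > 0"
    proof (intro ballI impI)
      fix t assume "t \<in> A" "t \<notin> {x,y,v}"
      hence "y < t" "t \<noteq> v" using A by auto
      hence "real y + 1 \<le> real t" "real t \<noteq> real v" by linarith+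
      thus "f (real t) > 0" unfolding f_def by (intro sqp) linarith+
    qed
    have "f (real x) < 0" unfolding f_def using xy yv by (intro sqn) linarith+
    moreover have "f (real y) < 0" unfolding f_def using xy yv by (intro sqn) linarith+
    ultimately show "\<forall>t\<in>{x,y,v}. t \<notin> A \<longrightarrow> f (real t) < 0" using True by simp
    have "f (real v) = 0" unfolding f_def by simp
    thus "\<forall>t\<in>A \<inter> {x,y,v}. f (real t) = 0" using xA by auto
  qed
next
  case False
  define f where "f = (\<lambda>t. (1*t + (-(real y + 1/2))) * (1*t + (-(real v + 1/2))) * (1*t + (-(real v - 1/2))))"
  have cf: "cubic f" unfolding f_def by (rule cubic_prod)
  have xA: "x \<notin> A" "y \<notin> A" using A xy by auto
  show ?thesis
  proof (rule cmpt_gen[OF cf])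
    show "\<forall>t\<in>A. t \<notin> {x,y,v} \<longrightarrow> f (real t) > 0"
    proof (intro ballI impI)
      fix t assume "t \<in> A" "t \<notin> {x,y,v}"
      hence "y < t" "t \<noteq> v" using A by auto
      hence ty: "real y + 1 \<le> real t" and "v < t \<or> t < v" by linarith+
      hence "real v + 1 \<le> real t \<or> real t + 1 \<le> real v" by linarith
      thus "f (real t) > 0"
      proof
        assume "real v + 1 \<le> real t" thus ?thesis unfolding f_def using ty by (intro ppp) linarith+
      next
        assume "real t + 1 \<le> real v" thus ?thesis unfolding f_def using ty by (intro pnn) linarith+
      qed
    qed
    have "f (real x) < 0" unfolding f_def using xy yv by (intro nnn) linarith+
    moreover have "f (real y) < 0" unfolding f_def using xy yv by (intro nnn) linarith+
    moreover have "f (real v) < 0" unfolding f_def using xy yv by (intro pnp) linarith+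
    ultimately show "\<forall>t\<in>{x,y,v}. t \<notin> A \<longrightarrow> f (real t) < 0" by simp
    show "\<forall>t\<in>A \<inter> {x,y,v}. f (real t) = 0" using xA False by auto
  qed
qed

lemma pat_same:
  assumes "x < y" "y < v" "v < w"
  shows "cmpt {x,y,v} {x,y,w}"
proof -
  define f where "f = (\<lambda>t. (1*t + (- real x)) * (1*t + (- real y)) * ((-1)*t + (real v + 1/2)))"
  have cf: "cubic f" unfolding f_def by (rule cubic_prod)
  have d: "v \<noteq> x" "v \<noteq> y" "v \<noteq> w" "w \<noteq> x" "w \<noteq> y" using assms by auto
  show ?thesis
  proof (rule cmpt_gen[OF cf])
    have "f (real v) > 0" unfolding f_def using assms by (intro ppp) linarith+
    thus "\<forall>t\<in>{x,y,v}. t \<notin> {x,y,w} \<longrightarrow> f (real t) > 0" using d by simp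
    have "f (real w) < 0" unfolding f_def using assms by (intro ppn) linarith+
    thus "\<forall>t\<in>{x,y,w}. t \<notin> {x,y,v} \<longrightarrow> f (real t) < 0" using d by simp
    have "f (real x) = 0" "f (real y) = 0" unfolding f_def by simp_all
    thus "\<forall>t\<in>{x,y,v} \<inter> {x,y,w}. f (real t) = 0" using d by auto
  qed
qed

lemma pat_78:
  assumes "x \<noteq> s" "v \<noteq> s" "x < M" "v < M" "s < M" "M \<le> y" "M \<le> w"
  shows "cmpt {s,x,v} {s,y,w}"
proof -
  define f where "f = (\<lambda>t. (1*t + (- real s)) * (1*t + (- real s)) * ((-1)*t + (real M - 1/2)))"
  have cf: "cubic f" unfolding f_def by (rule cubic_prod)
  have d: "x \<noteq> y" "x \<noteq> w" "v \<noteq> y" "v \<noteq> w" "y \<noteq> s" "w \<noteq> s" using assms by auto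
  show ?thesis
  proof (rule cmpt_gen[OF cf])
    have "f (real x) > 0" unfolding f_def using assms by (intro sqp) linarith+
    moreover have "f (real v) > 0" unfolding f_def using assms by (intro sqp) linarith+
    ultimately show "\<forall>t\<in>{s,x,v}. t \<notin> {s,y,w} \<longrightarrow> f (real t) > 0" by simp
    have "f (real y) < 0" unfolding f_def using assms by (intro sqn) linarith+
    moreover have "f (real w) < 0" unfolding f_def using assms by (intro sqn) linarith+
    ultimately show "\<forall>t\<in>{s,y,w}. t \<notin> {s,x,v} \<longrightarrow> f (real t) < 0" by simp
    have "f (real s) = 0" unfolding f_def by simp
    thus "\<forall>t\<in>{s,x,v} \<inter> {s,y,w}. f (real t) = 0" using d by auto
  qed
qed

lemma pat_6:
  assumes "x1 < y1" "y1 < x2" "x2 < v" "v < y2" "y2 < w"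
  shows "cmpt {x1,x2,v} {y1,y2,w}"
proof -
  define f where "f = (\<lambda>t. ((-1)*t + (real y1 - 1/2)) * (1*t + (-(real x2 - 1/2))) * (1*t + (-(real y2 - 1/2))))"
  have cf: "cubic f" unfolding f_def by (rule cubic_prod)
  show ?thesis
  proof (rule cmpt_gen[OF cf])
    have "f (real x1) > 0" unfolding f_def using assms by (intro pnn) linarith+
    moreover have "f (real x2) > 0" unfolding f_def using assms by (intro npn) linarith+
    moreover have "f (real v) > 0" unfolding f_def using assms by (intro npn) linarith+
    ultimately show "\<forall>t\<in>{x1,x2,v}. t \<notin> {y1,y2,w} \<longrightarrow> f (real t) > 0" by simp
    have "f (real y1) < 0" unfolding f_def using assms by (intro nnn) linarith+
    moreover have "f (real y2) < 0" unfolding f_def using assms by (intro npp) linarith+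
    moreover have "f (real w) < 0" unfolding f_def using assms by (intro npp) linarith+
    ultimately show "\<forall>t\<in>{y1,y2,w}. t \<notin> {x1,x2,v} \<longrightarrow> f (real t) < 0" by simp
    have "{x1,x2,v} \<inter> {y1,y2,w} = {}" using assms by auto
    thus "\<forall>t\<in>{x1,x2,v} \<inter> {y1,y2,w}. f (real t) = 0" by simp
  qed
qed

lemma pat_9:
  assumes "x < y" "y < s" "s < v" "v < w"
  shows "cmpt {x,s,v} {y,s,w}"
proof -
  define f where "f = (\<lambda>t. ((-1)*t + (real y - 1/2)) * (1*t + (- real s)) * (1*t + (-(real v + 1/2))))"
  have cf: "cubic f" unfolding f_def by (rule cubic_prod)
  have d: "x \<noteq> y" "x \<noteq> w" "v \<noteq> y" "v \<noteq> w" "y \<noteq> s" "w \<noteq> s" "x \<noteq> s" "v \<noteq> s"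
    using assms by auto
  show ?thesis
  proof (rule cmpt_gen[OF cf])
    have "f (real x) > 0" unfolding f_def using assms by (intro pnn) linarith+
    moreover have "f (real v) > 0" unfolding f_def using assms by (intro npn) linarith+
    ultimately show "\<forall>t\<in>{x,s,v}. t \<notin> {y,s,w} \<longrightarrow> f (real t) > 0" by simp
    have "f (real y) < 0" unfolding f_def using assms by (intro nnn) linarith+
    moreover have "f (real w) < 0" unfolding f_def using assms by (intro npp) linarith+
    ultimately show "\<forall>t\<in>{y,s,w}. t \<notin> {x,s,v} \<longrightarrow> f (real t) < 0" by simp
    have "f (real s) = 0" unfolding f_def by simp
    thus "\<forall>t\<in>{x,s,v} \<inter> {y,s,w}. f (real t) = 0" using d by auto
  qed
qed

definition SS :: "nat \<Rightarrow> nat \<Rightarrow> nat" where "SS m N = 1 + m*N"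
definition off :: "nat \<Rightarrow> nat \<Rightarrow> nat \<Rightarrow> nat \<Rightarrow> nat" where "off m N i j = j * SS m N + 1 + i * N"
definition book :: "nat \<Rightarrow> nat \<Rightarrow> nat \<Rightarrow> nat \<Rightarrow> nat \<Rightarrow> nat set" where
  "book m N i j u = {i * SS m N, j * SS m N, off m N i j + u}"
definition intl :: "nat \<Rightarrow> nat \<Rightarrow> nat \<Rightarrow> nat \<Rightarrow> nat set \<Rightarrow> nat set" where
  "intl m N i j e = (\<lambda>x. off m N i j + x) ` e"

lemma mult_step: "a < b \<Longrightarrow> a*S + S \<le> b*(S::nat)"
proof -
  assume "a < b" hence "Suc a \<le> b" by simp
  hence "Suc a * S \<le> b * S" by (rule mult_le_mono1)
  thus ?thesis by simp
qed

lemma S_pos: "SS m N > 0" unfolding SS_def by simp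

lemma blk_hi: assumes "i < m" "u < N" shows "off m N i j + u < j * SS m N + SS m N"
proof -
  have "i*N + N \<le> m*N" using mult_step[of i m N] assms by simp
  thus ?thesis unfolding off_def SS_def using assms by linarith
qed

lemma blk_hi2: assumes "i < m" shows "off m N i j + N \<le> j * SS m N + SS m N"
proof -
  have "i*N + N \<le> m*N" using mult_step[of i m N] assms by simp
  thus ?thesis unfolding off_def SS_def using assms by linarith
qed

lemma blk_lo: "j * SS m N < off m N i j + u"
  unfolding off_def by simp

lemma blk_order: assumes "i < i'" "u < N" shows "off m N i j + u < off m N i' j + u'"
proof -
  have "i*N + N \<le> i'*N" using mult_step[of i i' N] assms by simp
  thus ?thesis unfolding off_def using assms by linarith
qed

lemma apex_out: assumes "i < m"
  shows "a * SS m N < off m N i j \<or> off m N i j + N \<le> a * SS m N"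
proof (cases "a \<le> j")
  case True
  hence "a * SS m N \<le> j * SS m N" by (rule mult_le_mono1)
  thus ?thesis unfolding off_def by linarith
next
  case False
  hence "j * SS m N + SS m N \<le> a * SS m N" by (intro mult_step) simp
  thus ?thesis using blk_hi2[OF assms, of N j] by linarith
qed

lemma block_out:
  assumes "i < m" "i' < m" "(i',j') \<noteq> (i,j)" "u' < N"
  shows "off m N i' j' + u' < off m N i j \<or> off m N i j + N \<le> off m N i' j' + u'"
proof (cases "j' = j")
  case True
  hence "i' \<noteq> i" using assms(3) by simp
  hence "i' < i \<or> i < i'" by linarith
  thus ?thesis
  proof
    assume "i' < i" thus ?thesis using blk_order[of i' i u' N m j 0] assms True by simp
  next
    assume "i < i'"
    hence "i*N + N \<le> i'*N" using mult_step[of i i' N] by simp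
    thus ?thesis unfolding off_def True by linarith
  qed
next
  case False
  hence "j' < j \<or> j < j'" by linarith
  thus ?thesis
  proof
    assume "j' < j"
    hence "j' * SS m N + SS m N \<le> j * SS m N" by (rule mult_step)
    thus ?thesis using blk_hi[OF assms(2,4), of j'] blk_lo[of j m N i 0] by linarith
  next
    assume "j < j'"
    hence "j * SS m N + SS m N \<le> j' * SS m N" by (rule mult_step)
    thus ?thesis using blk_hi2[OF assms(1), of N j] blk_lo[of j' m N i' u'] by linarith
  qed
qed

lemma C_II:
  assumes "cmpt e e'" "e \<subseteq> {..<N}" "e' \<subseteq> {..<N}" "i < m" "i' < m" "e \<noteq> {}"
  shows "cmpt (intl m N i j e) (intl m N i' j' e')"
proof (cases "(i',j') = (i,j)")
  case True
  thus ?thesis unfolding intl_def using compat_shift[OF assms(1)] by simp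
next
  case False
  have N: "0 < N" using assms(2,6) by auto
  show ?thesis
  proof (rule pat_interval[of "off m N i j" "off m N i j + N"])
    show "off m N i j < off m N i j + N" using N by simp
    show "\<forall>t\<in>intl m N i j e. off m N i j \<le> t \<and> t < off m N i j + N"
      unfolding intl_def using assms(2) by auto
    show "\<forall>t\<in>intl m N i' j' e'. t < off m N i j \<or> off m N i j + N \<le> t"
    proof
      fix t assume "t \<in> intl m N i' j' e'"
      then obtain x where x: "t = off m N i' j' + x" "x < N" unfolding intl_def using assms(3) by auto
      show "t < off m N i j \<or> off m N i j + N \<le> t"
        unfolding x(1) by (rule block_out[OF assms(4,5) False x(2)])
    qed
  qed
qed

lemma C_IB:
  assumes "e \<subseteq> {..<N}" "i < j" "j < m" "i' < j'" "j' < m" "u' < N" "e \<noteq> {}"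
  shows "cmpt (intl m N i j e) (book m N i' j' u')"
proof (cases "(i',j') = (i,j)")
  case True
  hence ii: "i' = i" "j' = j" by auto
  have S: "i * SS m N < j * SS m N" using mult_step[OF assms(2), of "SS m N"] S_pos[of m N] by linarith
  show ?thesis unfolding book_def ii
  proof (rule pat_book_int)
    show "\<forall>t\<in>intl m N i j e. j * SS m N < t" unfolding intl_def using blk_lo by auto
    show "i * SS m N < j * SS m N" by (rule S)
    show "j * SS m N < off m N i j + u'" by (rule blk_lo)
  qed
next
  case False
  have N: "0 < N" using assms(1,7) by auto
  have im: "i < m" using assms by simp
  have im': "i' < m" using assms by simp
  show ?thesis
  proof (rule pat_interval[of "off m N i j" "off m N i j + N"])
    show "off m N i j < off m N i j + N" using N by simp
    show "\<forall>t\<in>intl m N i j e. off m N i j \<le> t \<and> t < off m N i j + N"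
      unfolding intl_def using assms(1) by auto
    have "off m N i' j' + u' < off m N i j \<or> off m N i j + N \<le> off m N i' j' + u'"
      by (rule block_out[OF im im' False assms(6)])
    thus "\<forall>t\<in>book m N i' j' u'. t < off m N i j \<or> off m N i j + N \<le> t"
      unfolding book_def using apex_out[OF im, of i' N j] apex_out[OF im, of j' N j] by auto
  qed
qed

lemma ball3: "P a \<Longrightarrow> P b \<Longrightarrow> P c \<Longrightarrow> \<forall>t\<in>{a,b,c}. P t" by simp

lemma apex_lt: "i < j \<Longrightarrow> i * SS m N < j * SS m N"
  using mult_step[of i j "SS m N"] S_pos[of m N] by linarith

lemma BB_eq:
  assumes "i < j" "i' < j" "j < m" "u < N" "u' < N"
  shows "cmpt (book m N i j u) (book m N i' j u')"
proof -
  let ?S = "SS m N"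
  have im: "i < m" "i' < m" using assms by auto
  consider "i = i'" "u = u'" | "i = i'" "u < u'" | "i = i'" "u' < u" | "i < i'" | "i' < i" by linarith
  thus ?thesis
  proof cases
    case 1 thus ?thesis by (simp add: compat_refl)
  next
    case 2
    show ?thesis unfolding book_def 2(1)
      by (rule pat_same) (use apex_lt[OF assms(2), of m N] blk_lo 2 in auto)
  next
    case 3
    show ?thesis unfolding book_def 3(1)
      by (rule compat_sym, rule pat_same) (use apex_lt[OF assms(2), of m N] blk_lo 3 in auto)
  next
    case 4
    show ?thesis unfolding book_def
    proof (rule pat_9)
      show "i * ?S < i' * ?S" by (rule apex_lt[OF 4, of m N])
      show "i' * ?S < j * ?S" by (rule apex_lt[OF assms(2), of m N])
      show "j * ?S < off m N i j + u" by (rule blk_lo)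
      show "off m N i j + u < off m N i' j + u'" by (rule blk_order[OF 4 assms(4)])
    qed
  next
    case 5
    show ?thesis unfolding book_def
    proof (rule compat_sym, rule pat_9)
      show "i' * ?S < i * ?S" by (rule apex_lt[OF 5, of m N])
      show "i * ?S < j * ?S" by (rule apex_lt[OF assms(1), of m N])
      show "j * ?S < off m N i' j + u'" by (rule blk_lo)
      show "off m N i' j + u' < off m N i j + u" by (rule blk_order[OF 5 assms(5)])
    qed
  qed
qed

lemma BB_lt:
  assumes "i < j" "i' < j'" "j < j'" "j' < m" "u < N" "u' < N"
  shows "cmpt (book m N i j u) (book m N i' j' u')"
proof -
  let ?S = "SS m N"
  have im: "i < m" "i' < m" using assms by auto
  have vhi: "off m N i j + u < j' * ?S"
    using blk_hi[OF im(1) assms(5), of j] mult_step[OF assms(3), of ?S] by linarith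
  have whi: "j' * ?S < off m N i' j' + u'" by (rule blk_lo)
  consider "i' = j" | "i' = i" | "i' \<noteq> j" "i' \<noteq> i" "j < i'" | "i < i'" "i' < j" | "i' < i" by linarith
  thus ?thesis
  proof cases
    case 1
    have eq: "book m N i j u = {j * ?S, i * ?S, off m N i j + u}" unfolding book_def by auto
    show ?thesis unfolding eq unfolding book_def 1
    proof (rule pat_78[where M = "j' * ?S"])
      show "i * ?S \<noteq> j * ?S" using apex_lt[OF assms(1), of m N] by linarith
      show "off m N i j + u \<noteq> j * ?S" using blk_lo[of j m N i u] by simp
      show "i * ?S < j' * ?S" using apex_lt[OF assms(1), of m N] apex_lt[OF assms(3), of m N] by linarith
      show "off m N i j + u < j' * ?S" by (rule vhi)
      show "j * ?S < j' * ?S" by (rule apex_lt[OF assms(3), of m N])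
      show "j' * ?S \<le> j' * ?S" by simp
      show "j' * ?S \<le> off m N j j' + u'" using whi 1 by simp
    qed
  next
    case 2
    show ?thesis unfolding book_def 2
    proof (rule pat_78[where M = "j' * ?S"])
      show "j * ?S \<noteq> i * ?S" using apex_lt[OF assms(1), of m N] by linarith
      show "off m N i j + u \<noteq> i * ?S" using blk_lo[of j m N i u] apex_lt[OF assms(1), of m N] by linarith
      show "j * ?S < j' * ?S" by (rule apex_lt[OF assms(3), of m N])
      show "off m N i j + u < j' * ?S" by (rule vhi)
      show "i * ?S < j' * ?S" using apex_lt[OF assms(1), of m N] apex_lt[OF assms(3), of m N] by linarith
      show "j' * ?S \<le> j' * ?S" by simp
      show "j' * ?S \<le> off m N i j' + u'" using whi 2 by simp
    qed
  next
    case 3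
    have a: "j * ?S + ?S \<le> i' * ?S" by (rule mult_step[OF 3(3)])
    have b: "off m N i j + u < j * ?S + ?S" by (rule blk_hi[OF im(1) assms(5)])
    have c: "i * ?S < j * ?S" by (rule apex_lt[OF assms(1), of m N])
    have d: "i' * ?S < j' * ?S" by (rule apex_lt[OF assms(2), of m N])
    show ?thesis unfolding book_def
    proof (rule pat_interval[of 0 "i' * ?S"])
      show "0 < i' * ?S" using a S_pos[of m N] by linarith
      have "i * ?S < i' * ?S" using a c by linarith
      moreover have "j * ?S < i' * ?S" using a S_pos[of m N] by linarith
      moreover have "off m N i j + u < i' * ?S" using a b by linarith
      ultimately show "\<forall>t\<in>{i * ?S, j * ?S, off m N i j + u}. 0 \<le> t \<and> t < i' * ?S" by (intro ball3) simp_all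
      show "\<forall>t\<in>{i' * ?S, j' * ?S, off m N i' j' + u'}. t < 0 \<or> i' * ?S \<le> t" by (insert S_pos[of m N] d whi, intro ball3; linarith)
    qed
  next
    case 4
    show ?thesis unfolding book_def
    proof (rule pat_6)
      show "i * ?S < i' * ?S" by (rule apex_lt[OF 4(1), of m N])
      show "i' * ?S < j * ?S" by (rule apex_lt[OF 4(2), of m N])
      show "j * ?S < off m N i j + u" by (rule blk_lo)
      show "off m N i j + u < j' * ?S" by (rule vhi)
      show "j' * ?S < off m N i' j' + u'" by (rule whi)
    qed
  next
    case 5
    have c: "i * ?S < j * ?S" by (rule apex_lt[OF assms(1), of m N])
    have e: "j * ?S < j' * ?S" by (rule apex_lt[OF assms(3), of m N])
    have f: "i' * ?S < i * ?S" by (rule apex_lt[OF 5, of m N])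
    show ?thesis unfolding book_def
    proof (rule pat_interval[of "i * ?S" "j' * ?S"])
      show "i * ?S < j' * ?S" using c e by linarith
      show "\<forall>t\<in>{i * ?S, j * ?S, off m N i j + u}. i * ?S \<le> t \<and> t < j' * ?S"
        by (insert S_pos[of m N] c e vhi blk_lo[of j m N i u], intro ball3; (intro conjI)?; linarith)
      show "\<forall>t\<in>{i' * ?S, j' * ?S, off m N i' j' + u'}. t < i * ?S \<or> j' * ?S \<le> t"
        by (insert S_pos[of m N] f whi, intro ball3; linarith)
    qed
  qed
qed

lemma C_BB:
  assumes "i < j" "j < m" "i' < j'" "j' < m" "u < N" "u' < N"
  shows "cmpt (book m N i j u) (book m N i' j' u')"
proof -
  consider "j < j'" | "j = j'" | "j' < j" by linarith
  thus ?thesis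
  proof cases
    case 1 thus ?thesis using BB_lt assms by blast
  next
    case 2 thus ?thesis using BB_eq[of i j i' m u N u'] assms by simp
  next
    case 3 thus ?thesis using BB_lt[of i' j' i j m u' N u] assms compat_sym by blast
  qed
qed

definition stepE :: "nat \<Rightarrow> nat \<Rightarrow> nat set set \<Rightarrow> nat set set" where
  "stepE m N E = {intl m N i j e | i j e. i < j \<and> j < m \<and> e \<in> E} \<union> {book m N i j u | i j u. i < j \<and> j < m \<and> u < N}"
definition stepN :: "nat \<Rightarrow> nat \<Rightarrow> nat" where "stepN m N = m * SS m N"
definition good :: "nat \<Rightarrow> nat set set \<Rightarrow> bool" where
  "good N E \<longleftrightarrow> (\<forall>e\<in>E. e \<subseteq> {..<N} \<and> card e = 3) \<and> (\<forall>e1\<in>E. \<forall>e2\<in>E. cmpt e1 e2)"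

lemma vert_lt:
  assumes "i < j" "j < m" "u < N"
  shows "i * SS m N < stepN m N" "j * SS m N < stepN m N" "off m N i j + u < stepN m N"
proof -
  have a: "j * SS m N + SS m N \<le> m * SS m N" by (rule mult_step[OF assms(2)])
  have b: "i * SS m N < j * SS m N" by (rule apex_lt[OF assms(1)])
  have c: "off m N i j + u < j * SS m N + SS m N" using blk_hi[of i m u N j] assms by simp
  have d: "0 < SS m N" by (rule S_pos)
  show "i * SS m N < stepN m N" unfolding stepN_def using a b d by linarith
  show "j * SS m N < stepN m N" unfolding stepN_def using a d by linarith
  show "off m N i j + u < stepN m N" unfolding stepN_def using a c by linarith
qed

lemma book_card: assumes "i < j" shows "card (book m N i j u) = 3"
proof -
  have b: "i * SS m N < j * SS m N" by (rule apex_lt[OF assms(1)])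
  have c: "j * SS m N < off m N i j + u" by (rule blk_lo)
  have d: "i * SS m N \<noteq> j * SS m N" "i * SS m N \<noteq> off m N i j + u" "j * SS m N \<noteq> off m N i j + u"
    using b c by linarith+
  show ?thesis unfolding book_def using d by simp
qed

lemma step_edges:
  assumes "good N E" "e' \<in> stepE m N E"
  shows "e' \<subseteq> {..<stepN m N} \<and> card e' = 3"
proof -
  from assms(2) consider (I) i j e where "e' = intl m N i j e" "i < j" "j < m" "e \<in> E"
    | (B) i j u where "e' = book m N i j u" "i < j" "j < m" "u < N"
    unfolding stepE_def by blast
  thus ?thesis
  proof cases
    case I
    have e: "e \<subseteq> {..<N}" "card e = 3" using assms(1) I(4) unfolding good_def by auto
    have "e' \<subseteq> {..<stepN m N}"
    proof
      fix t assume "t \<in> e'"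
      then obtain x where x: "t = off m N i j + x" "x \<in> e" using I(1) unfolding intl_def by auto
      hence "x < N" using e by auto
      thus "t \<in> {..<stepN m N}" using vert_lt[OF I(2,3), of x N] x by simp
    qed
    moreover have "card e' = 3" using I(1) e(2) unfolding intl_def by (simp add: card_image)
    ultimately show ?thesis by simp
  next
    case B
    have "e' \<subseteq> {..<stepN m N}" using vert_lt[OF B(2,3,4)] B(1) unfolding book_def by auto
    thus ?thesis using book_card[OF B(2)] B(1) by simp
  qed
qed

lemma step_good:
  assumes "good N E"
  shows "good (stepN m N) (stepE m N E)"
  unfolding good_def
proof (intro conjI ballI)
  fix e' assume "e' \<in> stepE m N E"
  thus "e' \<subseteq> {..<stepN m N}" "card e' = 3" using step_edges[OF assms] by auto
next
  fix e1 e2 assume e1: "e1 \<in> stepE m N E" and e2: "e2 \<in> stepE m N E"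
  have gE: "\<And>e. e \<in> E \<Longrightarrow> e \<subseteq> {..<N} \<and> e \<noteq> {}"
    using assms unfolding good_def by (metis card.empty zero_neq_numeral)
  have cE: "\<And>e e'. e \<in> E \<Longrightarrow> e' \<in> E \<Longrightarrow> cmpt e e'" using assms unfolding good_def by blast
  from e1 consider (I) i j e where "e1 = intl m N i j e" "i < j" "j < m" "e \<in> E"
    | (B) i j u where "e1 = book m N i j u" "i < j" "j < m" "u < N"
    unfolding stepE_def by blast
  thus "cmpt e1 e2"
  proof cases
    case I
    from e2 consider (I2) i' j' e' where "e2 = intl m N i' j' e'" "i' < j'" "j' < m" "e' \<in> E"
      | (B2) i' j' u' where "e2 = book m N i' j' u'" "i' < j'" "j' < m" "u' < N"
      unfolding stepE_def by blast
    thus ?thesis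
    proof cases
      case I2
      show ?thesis unfolding I(1) I2(1)
        by (rule C_II) (use cE[OF I(4) I2(4)] gE[OF I(4)] gE[OF I2(4)] I I2 in auto)
    next
      case B2
      show ?thesis unfolding I(1) B2(1)
        by (rule C_IB) (use gE[OF I(4)] I B2 in auto)
    qed
  next
    case B
    from e2 consider (I2) i' j' e' where "e2 = intl m N i' j' e'" "i' < j'" "j' < m" "e' \<in> E"
      | (B2) i' j' u' where "e2 = book m N i' j' u'" "i' < j'" "j' < m" "u' < N"
      unfolding stepE_def by blast
    thus ?thesis
    proof cases
      case I2
      show ?thesis unfolding B(1) I2(1)
        by (rule compat_sym, rule C_IB) (use gE[OF I2(4)] B I2 in auto)
    next
      case B2
      show ?thesis unfolding B(1) B2(1)
        by (rule C_BB) (use B B2 in auto)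
    qed
  qed
qed

definition colorable :: "nat \<Rightarrow> nat set set \<Rightarrow> nat \<Rightarrow> bool" where
  "colorable N E c \<longleftrightarrow> (\<exists>\<kappa>. weak_coloring {..<N} E c \<kappa>)"

lemma step_nc:
  assumes "good N E" "\<not> colorable N E c"
  shows "\<not> colorable (stepN (c+2) N) (stepE (c+2) N E) (c+1)"
proof
  let ?m = "c+2"
  let ?S = "SS ?m N"
  assume "colorable (stepN ?m N) (stepE ?m N E) (c+1)"
  then obtain \<kappa> where k: "weak_coloring {..<stepN ?m N} (stepE ?m N E) (c+1) \<kappa>"
    unfolding colorable_def by blast
  have kv: "\<And>v. v < stepN ?m N \<Longrightarrow> \<kappa> v \<in> {1..c+1}" using k unfolding weak_coloring_def by auto
  have ke: "\<And>e. e \<in> stepE ?m N E \<Longrightarrow> card (\<kappa> ` e) > 1" using k unfolding weak_coloring_def by auto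
  define col where "col j = \<kappa> (j * ?S)" for j
  have apex_in: "j * ?S < stepN ?m N" if "j < ?m" for j
    unfolding stepN_def using mult_step[OF that, of ?S] S_pos[of ?m N] by linarith
  have "col ` {..<?m} \<subseteq> {1..c+1}" using kv apex_in unfolding col_def by auto
  hence "card (col ` {..<?m}) \<le> card {1..c+1}" by (intro card_mono) auto
  hence "card (col ` {..<?m}) \<le> c + 1" by simp
  hence "card (col ` {..<?m}) < card {..<?m}" by simp
  hence "\<not> inj_on col {..<?m}" by (rule pigeonhole)
  then obtain i0 j0 where ij0: "i0 < ?m" "j0 < ?m" "i0 \<noteq> j0" "col i0 = col j0"
    unfolding inj_on_def by auto
  obtain i j where ij: "i < j" "j < ?m" "col i = col j"
  proof (cases "i0 < j0")
    case True thus ?thesis using that ij0 by blast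
  next
    case False thus ?thesis using that[of j0 i0] ij0 by simp
  qed
  define cc where "cc = col i"
  have cc_rng: "cc \<in> {1..c+1}" unfolding cc_def col_def using kv apex_in ij by auto
  have notcc: "\<kappa> (off ?m N i j + u) \<noteq> cc" if "u < N" for u
  proof
    assume h: "\<kappa> (off ?m N i j + u) = cc"
    have "book ?m N i j u \<in> stepE ?m N E" unfolding stepE_def using ij that by blast
    hence "card (\<kappa> ` book ?m N i j u) > 1" by (rule ke)
    moreover have "\<kappa> ` book ?m N i j u = {cc}"
      unfolding book_def using h ij(3) unfolding cc_def col_def by auto
    ultimately show False by simp
  qed
  define r where "r x = (if x < cc then x else x - 1)" for x :: nat
  define \<kappa>' where "\<kappa>' u = r (\<kappa> (off ?m N i j + u))" for u
  have "weak_coloring {..<N} E c \<kappa>'"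
    unfolding weak_coloring_def
  proof (intro conjI ballI)
    fix v assume "v \<in> {..<N}"
    hence v: "v < N" by simp
    have "\<kappa> (off ?m N i j + v) \<in> {1..c+1}" using kv vert_lt(3)[OF ij(1,2) v] by simp
    thus "\<kappa>' v \<in> {1..c}" unfolding \<kappa>'_def r_def using notcc[OF v] cc_rng by auto
  next
    fix e assume e: "e \<in> E"
    have eN: "e \<subseteq> {..<N}" using assms(1) e unfolding good_def by auto
    have "intl ?m N i j e \<in> stepE ?m N E" unfolding stepE_def using ij e by blast
    hence c1: "card (\<kappa> ` intl ?m N i j e) > 1" by (rule ke)
    have ncc: "cc \<notin> \<kappa> ` intl ?m N i j e" unfolding intl_def using notcc eN by auto
    have inj: "inj_on r (\<kappa> ` intl ?m N i j e)"
    proof (rule inj_onI)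
      fix x y assume "x \<in> \<kappa> ` intl ?m N i j e" "y \<in> \<kappa> ` intl ?m N i j e" "r x = r y"
      moreover hence "x \<noteq> cc" "y \<noteq> cc" using ncc by auto
      ultimately show "x = y" unfolding r_def by (auto split: if_splits)
    qed
    have "\<kappa>' ` e = r ` (\<kappa> ` intl ?m N i j e)" unfolding \<kappa>'_def intl_def by (simp add: image_image)
    hence "card (\<kappa>' ` e) = card (\<kappa> ` intl ?m N i j e)" using inj by (simp add: card_image)
    thus "card (\<kappa>' ` e) > 1" using c1 by simp
  qed
  thus False using assms(2) unfolding colorable_def by blast
qed

fun Hk :: "nat \<Rightarrow> nat \<times> nat set set" where
  "Hk 0 = (3, {{0,1,2}})"
| "Hk (Suc k) = (stepN (k+3) (fst (Hk k)), stepE (k+3) (fst (Hk k)) (snd (Hk k)))"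

lemma size_step:
  assumes "1 \<le> N" "N \<le> (k+3)^(3*(k+1))"
  shows "stepN (k+3) N \<le> (k+4)^(3*(k+2))"
proof -
  define m where "m = k + 3"
  have m3: "3 \<le> m" unfolding m_def by simp
  have e1: "stepN (k+3) N = m + m*m*N" unfolding stepN_def SS_def m_def by (simp add: algebra_simps)
  have "1 \<le> m * N" using assms(1) m3 by simp
  hence "m * 1 \<le> m * (m * N)" by (rule mult_le_mono2)
  hence a: "m \<le> m*m*N" by (simp add: mult.assoc)
  have b: "2 * (m*m*N) \<le> m * (m*m*N)" by (rule mult_le_mono1) (use m3 in simp)
  have "m + m*m*N \<le> m*(m*m*N)" using a b by linarith
  also have "\<dots> = m^3 * N" by (simp add: power3_eq_cube mult.assoc)
  also have "\<dots> \<le> m^3 * m^(3*(k+1))" using assms(2) unfolding m_def by simp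
  also have "\<dots> = m^(3*(k+2))" by (simp add: power_add[symmetric])
  also have "\<dots> \<le> (k+4)^(3*(k+2))" unfolding m_def by (intro power_mono) simp_all
  finally show ?thesis using e1 by simp
qed

lemma Hk_props:
  "good (fst (Hk k)) (snd (Hk k)) \<and> \<not> colorable (fst (Hk k)) (snd (Hk k)) (k+1)
   \<and> 1 \<le> fst (Hk k) \<and> fst (Hk k) \<le> (k+3)^(3*(k+1))"
proof (induction k)
  case 0
  have g: "good 3 {{0,1,2}}" unfolding good_def by (auto simp: compat_refl)
  have nc: "\<not> colorable 3 {{0,1,2}} 1"
  proof
    assume "colorable 3 {{0,1,2}} 1"
    then obtain \<kappa> where k: "weak_coloring {..<3::nat} {{0,1,2}} 1 \<kappa>" unfolding colorable_def by blast
    hence "\<kappa> 0 = 1" "\<kappa> 1 = 1" "\<kappa> 2 = 1" unfolding weak_coloring_def by auto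
    hence "\<kappa> ` {0,1,2} = {1}" by auto
    thus False using k unfolding weak_coloring_def by auto
  qed
  show ?case using g nc by simp
next
  case (Suc k)
  let ?N = "fst (Hk k)" and ?E = "snd (Hk k)"
  have g: "good ?N ?E" and nc: "\<not> colorable ?N ?E (k+1)" and N1: "1 \<le> ?N"
    and Nb: "?N \<le> (k+3)^(3*(k+1))" using Suc by auto
  have eq: "k + 1 + 2 = k + 3" by simp
  have nc': "\<not> colorable (stepN (k+3) ?N) (stepE (k+3) ?N ?E) (k+2)"
    using step_nc[OF g nc] unfolding eq by (simp add: numeral_eq_Suc)
  have g': "good (stepN (k+3) ?N) (stepE (k+3) ?N ?E)" by (rule step_good[OF g])
  have s: "stepN (k+3) ?N \<le> (k+4)^(3*(k+2))" by (rule size_step[OF N1 Nb])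
  have s1: "1 \<le> stepN (k+3) ?N" unfolding stepN_def SS_def by simp
  show ?case using nc' g' s s1 by (simp add: numeral_eq_Suc)
qed

definition gb :: "nat \<Rightarrow> nat" where "gb k = (k+3)^(3*(k+1))"

lemma ln_gb: "ln (real (gb k)) = real (3*(k+1)) * ln (real k + 3)"
  unfolding gb_def by (simp add: ln_realpow)

lemma real_part:
  assumes k1: "1 \<le> k" and lo: "gb k \<le> n" and hi: "n < gb (k+1)"
  shows "1/3 * ln (real n) / ln (ln (real n)) \<le> real k + 2"
proof -
  have gpos: "0 < real (gb k)" unfolding gb_def by simp
  have npos: "0 < real n" using lo gpos by linarith
  have L1: "ln (real (gb k)) \<le> ln (real n)" using lo gpos npos by simp
  have L2: "ln (real n) < ln (real (gb (k+1)))" using hi npos by simp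
  have l3: "1 < ln (real k + 3)"
  proof -
    have "ln 3 \<le> ln (real k + 3)" by simp
    thus ?thesis using ln3_gt_1 by linarith
  qed
  have m: "real (3*(k+1)) * 1 \<le> real (3*(k+1)) * ln (real k + 3)"
    using l3 by (intro mult_left_mono) simp_all
  have "real (3*(k+1)) \<le> ln (real n)" using m L1 ln_gb[of k] by linarith
  moreover have "real k + 4 \<le> real (3*(k+1))" using k1 by simp
  ultimately have Lk: "real k + 4 \<le> ln (real n)" by linarith
  define L where "L = ln (real n)"
  have Lpos: "0 < L" using Lk unfolding L_def by simp
  have a: "ln (real k + 4) \<le> ln L" using Lk Lpos unfolding L_def by simp
  have b: "0 < ln (real k + 4)" by simp
  have Lhi: "L < real (3*(k+2)) * ln (real k + 4)"
    using L2 ln_gb[of "k+1"] unfolding L_def by (simp add: add.commute)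
  have "1/3 * L / ln L \<le> 1/3 * L / ln (real k + 4)"
    using a b Lpos by (intro divide_left_mono) (simp_all add: mult_pos_pos)
  also have "\<dots> \<le> real k + 2"
  proof -
    have e: "real (3*(k+2)) * ln (real k + 4) = 3 * ((real k + 2) * ln (real k + 4))"
      by (simp add: algebra_simps)
    have "1/3 * L \<le> (real k + 2) * ln (real k + 4)" using Lhi e by linarith
    thus ?thesis using b by (simp add: divide_le_eq)
  qed
  finally show ?thesis unfolding L_def .
qed

lemma chrom_lb:
  assumes fin: "finite V" and Vn: "V = {..<n}" and g: "good N E" and Nn: "N \<le> n"
    and nc: "\<not> colorable N E (k+1)"
  shows "k + 2 \<le> weak_chromatic_number V E"
proof -
  let ?P = "\<lambda>c. \<exists>\<kappa>. weak_coloring V E c \<kappa>"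
  have eE: "\<And>e. e \<in> E \<Longrightarrow> e \<subseteq> {..<N} \<and> card e = 3" using g unfolding good_def by blast
  have Pn: "?P n"
  proof
    show "weak_coloring V E n (\<lambda>v. v + 1)"
      unfolding weak_coloring_def
    proof (intro conjI ballI)
      fix v assume "v \<in> V" thus "v + 1 \<in> {1..n}" using Vn by auto
    next
      fix e assume "e \<in> E"
      hence "card e = 3" using eE by blast
      moreover have "card ((\<lambda>v. v + 1) ` e) = card e" by (simp add: card_image)
      ultimately show "card ((\<lambda>v. v + 1) ` e) > 1" by simp
    qed
  qed
  have notP: "\<not> ?P c" if "c \<le> k + 1" for c
  proof
    assume "?P c"
    then obtain \<kappa> where k: "weak_coloring V E c \<kappa>" by blast
    have "weak_coloring {..<N} E (k+1) \<kappa>"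
      unfolding weak_coloring_def
    proof (intro conjI ballI)
      fix v assume "v \<in> {..<N}"
      hence "v \<in> V" using Vn Nn by auto
      hence "\<kappa> v \<in> {1..c}" using k unfolding weak_coloring_def by blast
      thus "\<kappa> v \<in> {1..k+1}" using that by auto
    next
      fix e assume "e \<in> E" thus "card (\<kappa> ` e) > 1" using k unfolding weak_coloring_def by blast
    qed
    thus False using nc unfolding colorable_def by blast
  qed
  show ?thesis
  proof (rule ccontr)
    assume "\<not> k + 2 \<le> weak_chromatic_number V E"
    hence "(LEAST c. ?P c) \<le> k + 1" unfolding weak_chromatic_number_def by simp
    moreover have "?P (LEAST c. ?P c)" using Pn by (rule LeastI)
    ultimately show False using notP by blast
  qed
qed

lemma embed:
  assumes g: "good N E" and Nn: "N \<le> n"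
  shows "embeddable_3_3 {..<n} E"
proof -
  have eE: "\<And>e. e \<in> E \<Longrightarrow> e \<subseteq> {..<N} \<and> card e = 3" using g unfolding good_def by blast
  have cE: "\<And>e e'. e \<in> E \<Longrightarrow> e' \<in> E \<Longrightarrow> cmpt e e'" using g unfolding good_def by blast
  have fE: "\<And>e. e \<in> E \<Longrightarrow> finite e" using eE by (metis card.infinite zero_neq_numeral)
  have "uniform_hypergraph 3 {..<n} E"
    unfolding uniform_hypergraph_def using eE Nn by fastforce
  moreover have "linear_embedding 3 {..<n} E mc"
    unfolding linear_embedding_def
  proof (intro conjI ballI)
    fix e assume "e \<in> E"
    hence "card e = 3" using eE by blast
    then obtain x y z where xyz: "e = {x,y,z}" "x \<noteq> y" "y \<noteq> z" "x \<noteq> z"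
      unfolding card_3_iff by blast
    have "aff_dim (mc ` e) = 2" unfolding xyz(1) using xyz(2,3,4) by (intro aff_dim_mc) auto
    thus "aff_dim (mc ` e) = int 3 - 1" by simp
  next
    fix e1 e2 assume e12: "e1 \<in> E" "e2 \<in> E"
    show "convex hull (mc ` e1) \<inter> convex hull (mc ` e2) = convex hull (mc ` (e1 \<inter> e2))"
      by (rule hull_compat[OF fE[OF e12(1)] fE[OF e12(2)] cE[OF e12]])
  qed
  ultimately show ?thesis unfolding embeddable_3_3_def by blast
qed

theorem mainTheorem16:
  shows "\<exists>c::real. c > 0 \<and> (\<exists>n0::nat. \<forall>n\<ge>n0. \<exists>(V::nat set) (E::nat set set).
            card V = n \<and> embeddable_3_3 V E \<and>
            real (weak_chromatic_number V E) \<ge> c * ln (real n) / ln (ln (real n)))"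
proof -
  have main: "\<forall>n\<ge>gb 1. \<exists>(V::nat set) (E::nat set set).
            card V = n \<and> embeddable_3_3 V E \<and>
            real (weak_chromatic_number V E) \<ge> (1/3::real) * ln (real n) / ln (ln (real n))"
  proof (intro allI impI)
  fix n :: nat assume n0: "gb 1 \<le> n"
  have ex: "\<exists>j. n < gb j"
  proof
    have "n + 3 \<le> (n+3)^(3*(n+1))" by (rule self_le_power) simp_all
    thus "n < gb n" unfolding gb_def by simp
  qed
  define j where "j = (LEAST j. n < gb j)"
  have nj: "n < gb j" unfolding j_def using ex by (rule LeastI_ex)
  have g0: "gb 0 \<le> gb 1" unfolding gb_def by simp
  have j0: "j \<noteq> 0"
  proof
    assume "j = 0" hence "n < gb 0" using nj by simp
    thus False using n0 g0 by linarith
  qed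
  have j1: "j \<noteq> 1"
  proof
    assume "j = 1" hence "n < gb 1" using nj by simp
    thus False using n0 by linarith
  qed
  define k where "k = j - 1"
  have k1: "1 \<le> k" using j0 j1 unfolding k_def by simp
  have jk: "j = k + 1" using j0 unfolding k_def by simp
  have lo: "gb k \<le> n"
  proof -
    have "k < j" using jk by simp
    hence "\<not> n < gb k" unfolding j_def by (rule not_less_Least)
    thus ?thesis by simp
  qed
  have hi: "n < gb (k+1)" using nj jk by simp
  define N where "N = fst (Hk k)"
  define E where "E = snd (Hk k)"
  have props: "good N E" "\<not> colorable N E (k+1)" "N \<le> gb k"
    using Hk_props[of k] unfolding N_def E_def gb_def by auto
  have Nn: "N \<le> n" using props(3) lo by simp
  have chi: "k + 2 \<le> weak_chromatic_number {..<n} E"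
    by (rule chrom_lb[OF _ refl props(1) Nn props(2)]) simp
  have "1/3 * ln (real n) / ln (ln (real n)) \<le> real k + 2" by (rule real_part[OF k1 lo hi])
  also have "\<dots> \<le> real (weak_chromatic_number {..<n} E)" using chi by linarith
  finally have "1/3 * ln (real n) / ln (ln (real n)) \<le> real (weak_chromatic_number {..<n} E)" .
  moreover have "card {..<n} = n" by simp
  moreover have "embeddable_3_3 {..<n} E" by (rule embed[OF props(1) Nn])
  ultimately show "\<exists>(V::nat set) (E::nat set set).
            card V = n \<and> embeddable_3_3 V E \<and>
            real (weak_chromatic_number V E) \<ge> 1/3 * ln (real n) / ln (ln (real n))" by blast
  qed
  have A: "\<exists>n0::nat. \<forall>n\<ge>n0. \<exists>(V::nat set) (E::nat set set).
            card V = n \<and> embeddable_3_3 V E \<and>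
            real (weak_chromatic_number V E) \<ge> (1/3::real) * ln (real n) / ln (ln (real n))"
    by (rule exI[of _ "gb 1"], rule main)
  show ?thesis by (rule exI[of _ "1/3::real"], rule conjI, simp, rule A)
qed

end
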